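(* Let $c_1=\frac{1}{\sqrt{\pi}\,e^{1/12}}$. Let $N\ge 1$ be an integer, $\varepsilon>0$, and $0<c<c_1^2/16$, and let $m=cN/\varepsilon^2$ with $\lambda:=m/N\ge 2$. Let $Y_1,\dots,Y_N$ be independent random variables, each with distribution $\mathrm{Poisson}(\lambda)$. Then \[\Pr\Big[\sum_{j=1}^N\big|Y_j-\tfrac{m}{N}\big|<2m\varepsilon\Big]\ \le\ \frac{4}{c_1^2}\cdot\frac1N.\] *)

theory Defs
  imports "HOL-Probability.Probability"
begin

definition c1 :: real where
  "c1 = 1 / (sqrt pi * exp (1/12))"

end

theory Submission
  imports Defs
begin


lemma pmf_int_sums:
  fixes p :: "nat pmf" and g :: "nat \<Rightarrow> real"
  assumes "summable (\<lambda>n. pmf p n * \<bar>g n\<bar>)" "(\<lambda>n. pmf p n * g n) sums s"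
  shows "integrable (measure_pmf p) g \<and> integral\<^sup>L (measure_pmf p) g = s"
proof -
  have i: "integrable (count_space UNIV) (\<lambda>n. pmf p n *\<^sub>R g n)"
    using assms(1) by (simp add: integrable_count_space_nat_iff abs_mult)
  have "integrable (measure_pmf p) g"
    unfolding measure_pmf_eq_density using i
    by (subst integrable_density) auto
  moreover have "integral\<^sup>L (measure_pmf p) g = s"
    unfolding measure_pmf_eq_density
    apply (subst integral_density)
    using i assms(2) by (auto simp: integral_count_space_nat sums_iff)
  ultimately show ?thesis by blast
qed

lemma fact_aux: "lam^(Suc k) / fact (Suc k) * c * real (Suc k) = lam * (lam^k / fact k * (c::real))"
proof -
  have g: "\<And>n F x. (n::real) > 0 \<Longrightarrow> F > 0 \<Longrightarrow> lam*x/(n*F)*c*n = lam*(x/F*c)" by (simp add: field_simps)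
  show ?thesis unfolding fact_Suc power_Suc of_nat_mult
    by (rule g) auto
qed

lemma pois_S0:
  fixes lam :: real assumes "0 < lam"
  shows "(\<lambda>n. lam^n / fact n * exp (-lam)) sums 1"
proof -
  have "(\<lambda>n. lam^n / fact n) sums exp lam"
    using exp_converges[of lam] by (simp add: field_simps)
  from sums_mult2[OF this, of "exp (-lam)"] show ?thesis by (simp add: exp_minus)
qed

lemma pois_S1:
  fixes lam :: real assumes "0 < lam"
  shows "(\<lambda>n. lam^n / fact n * exp (-lam) * real n) sums lam"
proof -
  have "(\<lambda>k. lam * (lam^k / fact k * exp (-lam))) sums (lam * 1)"
    by (rule sums_mult[OF pois_S0[OF assms]])
  moreover have "(\<lambda>k. lam * (lam^k / fact k * exp (-lam))) = (\<lambda>k. lam^(Suc k) / fact (Suc k) * exp (-lam) * real (Suc k))"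
    using fact_aux by (intro ext) metis
  ultimately have "(\<lambda>k. lam^(Suc k) / fact (Suc k) * exp (-lam) * real (Suc k)) sums lam" by simp
  then show ?thesis by (subst (asm) sums_Suc_iff) simp
qed

lemma pois_S2:
  fixes lam :: real assumes "0 < lam"
  shows "(\<lambda>n. lam^n / fact n * exp (-lam) * (real n)^2) sums (lam^2 + lam)"
proof -
  have "(\<lambda>k. lam * (lam^k / fact k * exp (-lam) * real k + lam^k / fact k * exp (-lam))) sums (lam * (lam + 1))"
    by (rule sums_mult[OF sums_add[OF pois_S1[OF assms] pois_S0[OF assms]]])
  moreover have "\<And>k. lam * (lam^k / fact k * exp (-lam) * real k + lam^k / fact k * exp (-lam)) = lam^(Suc k) / fact (Suc k) * exp (-lam) * (real (Suc k))^2"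
  proof -
    fix k
    have "lam^(Suc k) / fact (Suc k) * exp (-lam) * (real (Suc k))^2 = lam^(Suc k) / fact (Suc k) * (exp (-lam) * real (Suc k)) * real (Suc k)"
      by (simp add: power2_eq_square)
    also have "\<dots> = lam * (lam^k / fact k * (exp (-lam) * real (Suc k)))" by (rule fact_aux)
    finally show "lam * (lam^k / fact k * exp (-lam) * real k + lam^k / fact k * exp (-lam)) = lam^(Suc k) / fact (Suc k) * exp (-lam) * (real (Suc k))^2"
      by (simp add: algebra_simps)
  qed
  ultimately have "(\<lambda>k. lam^(Suc k) / fact (Suc k) * exp (-lam) * (real (Suc k))^2) sums (lam^2+lam)"
    by (simp add: algebra_simps power2_eq_square)
  then show ?thesis by (subst (asm) sums_Suc_iff) simp
qed

lemma telesc: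
  fixes lam :: real
  shows "(\<Sum>n\<le>k. (lam - real n) * (lam^n / fact n)) = lam^(Suc k) / fact k"
proof (induction k)
  case 0 then show ?case by simp
next
  case (Suc k)
  have "(lam - real (Suc k)) * (lam ^ Suc k / fact (Suc k)) = lam^(Suc (Suc k)) / fact (Suc k) - lam^(Suc k) / fact k"
  proof -
    have g: "\<And>n F x. (n::real) > 0 \<Longrightarrow> F > 0 \<Longrightarrow> (lam - n) * (lam * x / (n * F)) = lam * (lam * x) / (n * F) - lam * x / F"
      by (simp add: field_simps)
    show ?thesis unfolding fact_Suc power_Suc of_nat_mult by (rule g) auto
  qed
  then show ?case using Suc by simp
qed



lemma expineq: fixes y :: real assumes "0 \<le> y"
  shows "(1 - y) * exp y \<le> (1 + y) * exp (-y)"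
proof -
  let ?f = "\<lambda>y::real. (1 + y) * exp (-y) - (1 - y) * exp y"
  have "?f 0 \<le> ?f y"
  proof (rule DERIV_nonneg_imp_nondecreasing[OF assms])
    fix x :: real assume x: "0 \<le> x" "x \<le> y"
    have "DERIV ?f x :> (exp (-x) - (1 + x) * exp (-x) - (- exp x + (1 - x) * exp x))"
      by (auto intro!: derivative_eq_intros)
    moreover have "(exp (-x) - (1 + x) * exp (-x) - (- exp x + (1 - x) * exp x)) = x * (exp x - exp (-x))"
      by (simp add: algebra_simps)
    moreover have "x * (exp x - exp (-x)) \<ge> 0" using x by auto
    ultimately show "\<exists>d. DERIV ?f x :> d \<and> d \<ge> 0" by auto
  qed
  then show ?thesis by simp
qed

lemma e2_le: fixes k :: nat assumes "k \<ge> 1"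
  shows "exp 2 * real k ^ (2*k+1) \<le> real (k+1) ^ (2*k+1)"
proof -
  define y where "y = 1 / (2 * real k + 1)"
  have y0: "0 \<le> y" "y < 1" using assms by (auto simp: y_def)
  have "(1 - y) * exp y * exp y \<le> (1 + y) * exp (-y) * exp y"
    using expineq[OF y0(1)] by (intro mult_right_mono) auto
  moreover have "exp y * exp y = exp (2*y)" by (simp flip: exp_add)
  ultimately have "(1 - y) * exp (2*y) \<le> 1 + y" by (simp add: mult.assoc exp_minus)
  hence "exp (2*y) \<le> (1 + y) / (1 - y)" using y0 by (simp add: field_simps)
  also have "(1 + y) / (1 - y) = real (k+1) / real k"
  proof -
    have kp: "real k > 0" using assms by simp
    have a: "1 + y = 2 * real (k+1) / (2 * real k + 1)" by (simp add: y_def field_simps)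
    have b: "1 - y = 2 * real k / (2 * real k + 1)" by (simp add: y_def field_simps)
    have g: "\<And>a::real. 0 < a \<Longrightarrow> (2*(a+1)/(2*a+1)) / (2*a/(2*a+1)) = (a+1)/a"
    proof -
      fix a :: real assume a: "0 < a"
      have "2*a+1 \<noteq> 0" using a by simp
      then show "(2*(a+1)/(2*a+1)) / (2*a/(2*a+1)) = (a+1)/a" using a by (simp add: divide_simps)
    qed
    show ?thesis unfolding a b using g[OF kp] by (simp add: add.commute)
  qed
  finally have 1: "exp (2*y) \<le> real (k+1) / real k" .
  have d: "2*real k+1 \<noteq> 0" by (simp add: add_pos_nonneg)
  have r: "real (2*k+1) * (2*y) = 2" using d by (simp add: y_def field_simps)
  have "exp 2 = exp (2*y) ^ (2*k+1)"
    by (subst r[symmetric], rule exp_of_nat_mult)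
  also have "\<dots> \<le> (real (k+1) / real k) ^ (2*k+1)" using 1 by (intro power_mono) auto
  finally show ?thesis using assms by (simp add: field_simps power_divide)
qed

lemma stirling_ub: fixes k :: nat assumes "k \<ge> 1"
  shows "(fact k)^2 * exp (2 * real k) \<le> exp 2 * real k ^ (2*k+1)"
  using assms
proof (induction k rule: dec_induct)
  case base then show ?case by simp
next
  case (step k)
  have "(fact (Suc k) :: real)^2 * exp (2 * real (Suc k)) = (real (k+1))^2 * exp 2 * ((fact k)^2 * exp (2 * real k))"
  proof -
    have "exp (2 * real (Suc k)) = exp 2 * exp (2 * real k)"
      by (simp add: exp_add[symmetric] distrib_left)
    moreover have "(fact (Suc k) :: real) = real (k+1) * fact k" by simp
    ultimately show ?thesis by (simp only: power_mult_distrib) (simp add: algebra_simps)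
  qed
  also have "\<dots> \<le> (real (k+1))^2 * exp 2 * (exp 2 * real k ^ (2*k+1))"
    using step.IH by (intro mult_left_mono) auto
  also have "\<dots> \<le> (real (k+1))^2 * exp 2 * (real (k+1) ^ (2*k+1))"
    using e2_le[OF step.hyps(1)] by (intro mult_left_mono) auto
  also have "\<dots> = exp 2 * real (Suc k) ^ (2 * Suc k + 1)"
    by (simp add: power_add power2_eq_square algebra_simps)
  finally show ?case .
qed

lemma tbound: fixes t :: real assumes "0 \<le> t" "t \<le> 1"
  shows "2 / exp 1 \<le> (1 + t) * exp (-t)"
proof -
  define s where "s = 1 - t"
  have s: "0 \<le> s" "s \<le> 1" using assms by (auto simp: s_def)
  have q: "1 + s + s^2/2 \<le> exp s" by (rule exp_lower_Taylor_quadratic[OF s(1)])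
  have s3: "s^3 \<le> s"
  proof -
    have "s * s^2 \<le> s * 1" using s by (intro mult_left_mono) (auto simp: power_le_one)
    then show ?thesis by (simp add: power3_eq_cube power2_eq_square)
  qed
  have e: "(1 - s/2) * (1 + s + s^2/2) = 1 + s/2 - s^3/4"
    by (simp add: field_simps power2_eq_square power3_eq_cube)
  have "(1 - s/2) * (1 + s + s^2/2) \<ge> 1" unfolding e using s3 s by linarith
  moreover have "(1 - s/2) * (1 + s + s^2/2) \<le> (1 - s/2) * exp s"
    using q s by (intro mult_left_mono) auto
  ultimately have "1 \<le> (1 - s/2) * exp s" by linarith
  hence "exp (-s) \<le> 1 - s/2" by (simp add: exp_minus field_simps)
  hence "2 * exp (-s) \<le> 1 + t" by (simp add: s_def field_simps)
  hence "2 * exp (-s) * exp (-t) \<le> (1 + t) * exp (-t)" by (intro mult_right_mono) auto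
  moreover have "exp (-s) * exp (-t) = 1 / exp 1" 
  proof -
    have "exp (-s) * exp (-t) = exp (-s + -t)" by (simp only: exp_add)
    also have "-s + -t = -1" by (simp add: s_def)
    finally show ?thesis by (simp add: exp_minus divide_inverse)
  qed
  ultimately show ?thesis by (simp only: mult.assoc)
qed



lemma pois_int:
  fixes lam :: real assumes lp: "0 < lam"
  defines "P \<equiv> measure_pmf (poisson_pmf lam)"
  shows "integrable P real" "integral\<^sup>L P real = lam"
    "integrable P (\<lambda>n. (real n)^2)" "integral\<^sup>L P (\<lambda>n. (real n)^2) = lam^2 + lam"
proof -
  have pm: "\<And>n. pmf (poisson_pmf lam) n = lam^n / fact n * exp (-lam)" using lp by simp
  have s1: "(\<lambda>n. pmf (poisson_pmf lam) n * real n) sums lam" unfolding pm using pois_S1[OF lp] .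
  have s2: "(\<lambda>n. pmf (poisson_pmf lam) n * (real n)^2) sums (lam^2+lam)" unfolding pm using pois_S2[OF lp] .
  have "integrable P real \<and> integral\<^sup>L P real = lam"
    unfolding P_def by (rule pmf_int_sums) (use s1 in \<open>auto simp: sums_iff\<close>)
  then show "integrable P real" "integral\<^sup>L P real = lam" by auto
  have "integrable P (\<lambda>n. (real n)^2) \<and> integral\<^sup>L P (\<lambda>n. (real n)^2) = lam^2 + lam"
    unfolding P_def by (rule pmf_int_sums) (use s2 in \<open>auto simp: sums_iff\<close>)
  then show "integrable P (\<lambda>n. (real n)^2)" "integral\<^sup>L P (\<lambda>n. (real n)^2) = lam^2 + lam" by auto
qed

lemma pois_mad:
  fixes lam :: real assumes lp: "0 < lam"
  defines "P \<equiv> measure_pmf (poisson_pmf lam)"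
  defines "k \<equiv> nat \<lfloor>lam\<rfloor>"
  shows "integral\<^sup>L P (\<lambda>n. \<bar>real n - lam\<bar>) = 2 * (exp (-lam) * lam^(Suc k) / fact k)"
proof -
  interpret prob_space P unfolding P_def by (rule prob_space_measure_pmf)
  note I = pois_int[OF lp, folded P_def]
  define h where "h n = max (lam - real n) 0" for n :: nat
  have hint: "integral\<^sup>L P h = (\<Sum>n\<le>k. pmf (poisson_pmf lam) n *\<^sub>R h n)"
    unfolding P_def
  proof (rule integral_measure_pmf)
    show "finite {..k}" by simp
    fix a assume "h a \<noteq> 0"
    then have "real a < lam" by (auto simp: h_def)
    then show "a \<in> {..k}" unfolding k_def using lp by (auto simp: le_nat_floor)
  qed
  also have "\<dots> = exp (-lam) * (\<Sum>n\<le>k. (lam - real n) * (lam^n / fact n))"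
  proof -
    have "h n = lam - real n" if "n \<le> k" for n
    proof -
      have "real n \<le> real k" using that by simp
      also have "real k = of_int \<lfloor>lam\<rfloor>" unfolding k_def using lp by simp
      also have "\<dots> \<le> lam" by simp
      finally show ?thesis by (simp add: h_def)
    qed
    then show ?thesis using lp by (simp add: sum_distrib_left) (intro sum.cong, simp_all)
  qed
  also have "\<dots> = exp (-lam) * lam^(Suc k) / fact k" unfolding telesc by simp
  finally have hv: "integral\<^sup>L P h = exp (-lam) * lam^(Suc k) / fact k" .
  have hi: "integrable P h"
    by (rule integrable_const_bound[where B=lam]) (use lp in \<open>auto simp: h_def P_def\<close>)
  have eq: "(\<lambda>n. \<bar>real n - lam\<bar>) = (\<lambda>n. (real n - lam) + 2 * h n)"
    by (auto simp: h_def fun_eq_iff max_def abs_if)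
  have "integral\<^sup>L P (\<lambda>n. (real n - lam) + 2 * h n) = integral\<^sup>L P (\<lambda>n. real n - lam) + integral\<^sup>L P (\<lambda>n. 2 * h n)"
    using I hi by (intro Bochner_Integration.integral_add) auto
  also have "integral\<^sup>L P (\<lambda>n. real n - lam) = 0"
    using I by (subst Bochner_Integration.integral_diff) (auto simp: prob_space)
  also have "integral\<^sup>L P (\<lambda>n. 2 * h n) = 2 * integral\<^sup>L P h" by simp
  finally show ?thesis unfolding eq hv by simp
qed
lemma exp_sq: "exp (x::real)^2 = exp (2*x)"
  using exp_of_nat_mult[of 2 x] by simp

lemma mad_lb:
  fixes lam :: real assumes l1: "1 \<le> lam"
  defines "k \<equiv> nat \<lfloor>lam\<rfloor>"
  shows "(1/(sqrt pi * exp (1/12)))^2 * lam \<le> (2*(exp(-lam)*lam^(Suc k)/fact k))^2"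
proof -
  have kl: "real k \<le> lam" "lam < real k + 1" unfolding k_def using l1 by linarith+
  have k1: "k \<ge> 1" unfolding k_def using l1 by linarith
  hence kp: "real k > 0" by simp
  define t where "t = lam - real k"
  have t: "0 \<le> t" "t \<le> 1" using kl by (auto simp: t_def)
  have fp: "(fact k :: real) > 0" by simp
  have A2: "(exp(-lam)*lam^(Suc k)/fact k)^2 = exp(-lam)^2 * lam^(2*k+2) / (fact k)^2"
  proof -
    have "(lam^(Suc k))^2 = lam^(Suc k * 2)" by (simp only: power_mult)
    also have "Suc k * 2 = 2*k+2" by simp
    finally have "(lam^(Suc k))^2 = lam^(2*k+2)" .
    then show ?thesis by (simp only: power_divide power_mult_distrib)
  qed
  have st: "(fact k)^2 \<le> exp 2 * real k ^ (2*k+1) / exp (2 * real k)"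
    using stirling_ub[OF k1] by (simp add: field_simps)
  have "exp(-lam)^2 * lam^(2*k+2) / (exp 2 * real k ^ (2*k+1) / exp (2 * real k)) \<le> exp(-lam)^2 * lam^(2*k+2) / (fact k)^2"
    using st fp l1 kp by (intro divide_left_mono) (auto intro!: mult_pos_pos divide_pos_pos)
  also have "exp(-lam)^2 * lam^(2*k+2) / (exp 2 * real k ^ (2*k+1) / exp (2 * real k))
     = lam * exp(-t)^2 * (lam / real k)^(2*k+1) / exp 2"
  proof -
    have e1: "exp(-lam)^2 * exp (2 * real k) = exp(-t)^2"
    proof -
      have "exp(-lam)^2 * exp (2 * real k) = exp (2 * (-lam) + 2 * real k)"
        by (simp only: exp_sq exp_add)
      also have "2 * (-lam) + 2 * real k = 2 * (-t)" by (simp add: t_def)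
      finally show ?thesis by (simp only: exp_sq)
    qed
    have e2: "lam^(2*k+2) = lam * lam^(2*k+1)" by simp
    have "exp(-lam)^2 * lam^(2*k+2) / (exp 2 * real k ^ (2*k+1) / exp (2 * real k))
        = lam * (exp(-lam)^2 * exp (2 * real k)) * (lam^(2*k+1) / real k ^ (2*k+1)) / exp 2"
      unfolding e2 using kp by (simp add: field_simps)
    then show ?thesis unfolding e1 power_divide .
  qed
  finally have a1: "lam * exp(-t)^2 * (lam / real k)^(2*k+1) / exp 2 \<le> (exp(-lam)*lam^(Suc k)/fact k)^2"
    unfolding A2 .
  have b: "(1 + t)^2 \<le> (lam / real k)^(2*k+1)"
  proof -
    have q: "lam / real k = 1 + t / real k" using kp by (simp add: t_def field_simps)
    have "1 + t = 1 + real k * (t / real k)" using kp by simp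
    also have "\<dots> \<le> (1 + t / real k)^k" by (rule Bernoulli_inequality) (use t kp in \<open>smt (verit) divide_nonneg_pos\<close>)
    finally have "(1 + t)^2 \<le> ((lam / real k)^k)^2" unfolding q using t by (intro power_mono) auto
    also have "\<dots> = (lam / real k)^(k*2)" by (simp only: power_mult)
    also have "\<dots> \<le> (lam / real k)^(2*k+1)" using kl kp by (intro power_increasing) (auto simp: field_simps)
    finally show ?thesis .
  qed
  have c: "(2 / exp 1)^2 \<le> ((1 + t) * exp(-t))^2"
    using tbound[OF t] by (intro power_mono) auto
  have "lam * (2 / exp 1)^2 / exp 2 \<le> lam * ((1 + t)^2 * exp(-t)^2) / exp 2"
    using c l1 by (intro divide_right_mono mult_left_mono) (auto simp: power_mult_distrib)
  also have "\<dots> \<le> lam * exp(-t)^2 * (lam / real k)^(2*k+1) / exp 2"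
  proof -
    have "lam * exp(-t)^2 * (1 + t)^2 \<le> lam * exp(-t)^2 * (lam / real k)^(2*k+1)"
      using b l1 by (intro mult_left_mono) auto
    then show ?thesis by (intro divide_right_mono) (auto simp: algebra_simps)
  qed
  also note a1
  also have "lam * (2 / exp 1)^2 / exp 2 = lam * 4 / exp 4"
  proof -
    have "exp 1 ^ 2 * exp 2 = exp (4::real)" by (simp only: exp_sq exp_add[symmetric]) simp
    then show ?thesis by (simp add: power_divide field_simps)
  qed
  finally have d: "lam * 4 / exp 4 \<le> (exp(-lam)*lam^(Suc k)/fact k)^2" .
  have num: "exp 4 \<le> 16 * (pi * exp (1/6))"
  proof -
    have "exp (4::real) = exp 1 ^ 4" using exp_of_nat_mult[of 4 "1::real"] by simp
    also have "\<dots> \<le> (272/100)^4" using e_less_272 by (intro power_mono) auto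
    also have "\<dots> \<le> 16 * (3 * (7/6))" by (simp add: power_divide)
    also have "\<dots> \<le> 16 * (pi * exp (1/6))"
      using pi_gt3 exp_ge_add_one_self[of "1/6::real"] by (intro mult_left_mono mult_mono) auto
    finally show ?thesis .
  qed
  have "(1/(sqrt pi * exp (1/12)))^2 = 1 / (pi * exp (1/6))"
  proof -
    have "exp (1/12::real)^2 = exp (1/6)" by (simp only: exp_sq) simp
    then show ?thesis by (simp add: power_divide power_mult_distrib)
  qed
  hence "(1/(sqrt pi * exp (1/12)))^2 * lam \<le> 4 * (lam * 4 / exp 4)"
    using num l1 by (simp add: field_simps)
  also have "\<dots> \<le> 4 * (exp(-lam)*lam^(Suc k)/fact k)^2" using d by simp
  also have "4 * (exp(-lam)*lam^(Suc k)/fact k)^2 = (2*(exp(-lam)*lam^(Suc k)/fact k))^2"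
    by (simp only: power_mult_distrib) simp
  finally show ?thesis .
qed




lemma transfer_pmf:
  fixes M :: "'a measure" and X :: "'a \<Rightarrow> nat" and g :: "nat \<Rightarrow> real"
  assumes "X \<in> measurable M (count_space UNIV)"
    and "distr M (count_space UNIV) X = measure_pmf p"
    and "integrable (measure_pmf p) g"
  shows "integrable M (\<lambda>x. g (X x)) \<and> integral\<^sup>L M (\<lambda>x. g (X x)) = integral\<^sup>L (measure_pmf p) g"
proof -
  have gm: "g \<in> borel_measurable (count_space UNIV)" by simp
  have "integrable (distr M (count_space UNIV) X) g" using assms by simp
  then have "integrable M (\<lambda>x. g (X x))" using integrable_distr_eq[OF assms(1) gm] by simp
  moreover have "integral\<^sup>L M (\<lambda>x. g (X x)) = integral\<^sup>L (measure_pmf p) g"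
    using integral_distr[OF assms(1) gm] assms(2) by simp
  ultimately show ?thesis by simp
qed

theorem mainTheorem3:
  fixes M :: "'a measure" and Y :: "nat \<Rightarrow> 'a \<Rightarrow> nat"
    and N :: nat and \<epsilon> c m lam :: real
  assumes "prob_space M"
    and "N \<ge> 1" and "\<epsilon> > 0" and "0 < c" and "c < c1^2 / 16"
    and "m = c * real N / \<epsilon>^2" and "lam = m / real N" and "lam \<ge> 2"
    and "prob_space.indep_vars M (\<lambda>_. count_space UNIV) Y {1..N}"
    and "\<And>j. j \<in> {1..N} \<Longrightarrow> distr M (count_space UNIV) (Y j) = measure_pmf (poisson_pmf lam)"
  shows "measure M {x \<in> space M. (\<Sum>j=1..N. \<bar>real (Y j x) - m / real N\<bar>) < 2 * m * \<epsilon>}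
           \<le> 4 / c1^2 * (1 / real N)"
proof -
  interpret prob_space M by (rule assms(1))
  note indep = assms(9)
  have Np: "real N > 0" using assms(2) by simp
  have lp: "lam > 0" using assms(8) by simp
  have mlam: "m / real N = lam" using assms(7) by simp
  define P where "P = measure_pmf (poisson_pmf lam)"
  interpret P: prob_space P unfolding P_def by (rule prob_space_measure_pmf)
  note I = pois_int[OF lp, folded P_def]
  define \<mu> where "\<mu> = integral\<^sup>L P (\<lambda>n. \<bar>real n - lam\<bar>)"
  define k where "k = nat \<lfloor>lam\<rfloor>"
  have mu_eq: "\<mu> = 2 * (exp (-lam) * lam^(Suc k) / fact k)"
    unfolding \<mu>_def P_def k_def by (rule pois_mad[OF lp])
  have mu_lb: "c1^2 * lam \<le> \<mu>^2"
    unfolding mu_eq c1_def k_def using assms(8) by (intro mad_lb) simp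
  have mu_pos: "\<mu> > 0" unfolding mu_eq using lp by simp
  have c1_pos: "c1 > 0" unfolding c1_def by simp
  define g0 where "g0 n = \<bar>real n - lam\<bar> - \<mu>" for n :: nat
  have int_sq: "integrable P (\<lambda>n. (real n - lam)^2)"
  proof -
    have "(\<lambda>n. (real n - lam)^2) = (\<lambda>n. (real n)^2 - 2 * lam * real n + lam^2)"
      by (simp add: power2_eq_square algebra_simps)
    then show ?thesis using I by simp
  qed
  have E_sq: "integral\<^sup>L P (\<lambda>n. (real n - lam)^2) = lam"
  proof -
    have "(\<lambda>n. (real n - lam)^2) = (\<lambda>n. ((real n)^2 - 2 * lam * real n) + lam^2)"
      by (simp add: power2_eq_square algebra_simps)
    then have "integral\<^sup>L P (\<lambda>n. (real n - lam)^2) = integral\<^sup>L P (\<lambda>n. (real n)^2 - 2 * lam * real n) + lam^2"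
      using I by (simp add: Bochner_Integration.integral_add P.prob_space)
    also have "integral\<^sup>L P (\<lambda>n. (real n)^2 - 2 * lam * real n) = (lam^2 + lam) - 2 * lam * lam"
      using I by (subst Bochner_Integration.integral_diff) auto
    finally show ?thesis by (simp add: power2_eq_square)
  qed
  have int_abs: "integrable P (\<lambda>n. \<bar>real n - lam\<bar>)"
    using I by (intro integrable_abs) auto
  have int_g0: "integrable P g0" unfolding g0_def using int_abs by auto
  have E_g0: "integral\<^sup>L P g0 = 0"
    unfolding g0_def using int_abs by (simp add: \<mu>_def P.prob_space)
  have g0sq: "(\<lambda>n. (g0 n)^2) = (\<lambda>n. ((real n - lam)^2 - 2 * \<mu> * \<bar>real n - lam\<bar>) + \<mu>^2)"
    by (auto simp: g0_def fun_eq_iff power2_eq_square algebra_simps abs_mult_self_eq)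
  have int_g0sq: "integrable P (\<lambda>n. (g0 n)^2)"
    unfolding g0sq using int_sq int_abs by auto
  have E_g0sq: "integral\<^sup>L P (\<lambda>n. (g0 n)^2) \<le> lam"
  proof -
    have "integral\<^sup>L P (\<lambda>n. (g0 n)^2) = (lam - 2 * \<mu> * \<mu>) + \<mu>^2"
      unfolding g0sq using int_sq int_abs E_sq
      by (simp add: Bochner_Integration.integral_add Bochner_Integration.integral_diff P.prob_space \<mu>_def)
    then show ?thesis by (simp add: power2_eq_square)
  qed
  have rv: "Y j \<in> measurable M (count_space UNIV)" if "j \<in> {1..N}" for j
    using indep that unfolding indep_vars_def by auto
  define Z where "Z j x = g0 (Y j x)" for j x
  have Zm: "Z j \<in> borel_measurable M" if "j \<in> {1..N}" for j
    unfolding Z_def using rv[OF that] by (rule measurable_compose) simp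
  have tr: "integrable M (\<lambda>x. g (Y j x)) \<and> integral\<^sup>L M (\<lambda>x. g (Y j x)) = integral\<^sup>L P g"
    if "j \<in> {1..N}" "integrable P g" for j and g :: "nat \<Rightarrow> real"
    unfolding P_def by (rule transfer_pmf[OF rv[OF that(1)] assms(10)[OF that(1)] that(2)[unfolded P_def]])
  have Zint: "integrable M (Z j)" "integral\<^sup>L M (Z j) = 0" if "j \<in> {1..N}" for j
    using tr[OF that int_g0] E_g0 unfolding Z_def by auto
  have Zsq: "integrable M (\<lambda>x. (Z j x)^2)" "integral\<^sup>L M (\<lambda>x. (Z j x)^2) \<le> lam" if "j \<in> {1..N}" for j
    using tr[OF that int_g0sq] E_g0sq unfolding Z_def by auto
  have indZ: "indep_vars (\<lambda>_. borel) Z {1..N}"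
    unfolding Z_def by (rule indep_vars_compose2[OF indep]) simp
  have cross: "integrable M (\<lambda>x. Z i x * Z j x) \<and> integral\<^sup>L M (\<lambda>x. Z i x * Z j x) = (if i = j then integral\<^sup>L M (\<lambda>x. (Z j x)^2) else 0)"
    if "i \<in> {1..N}" "j \<in> {1..N}" for i j
  proof (cases "i = j")
    case True then show ?thesis using Zsq[OF that(2)] by (simp add: power2_eq_square)
  next
    case False
    have ind2: "indep_vars (\<lambda>_. borel) Z {i, j}"
      using indZ by (rule indep_vars_subset) (use that in auto)
    have ii: "\<And>l. l \<in> {i,j} \<Longrightarrow> integrable M (Z l)" using Zint that by auto
    have "integrable M (\<lambda>x. \<Prod>l\<in>{i,j}. Z l x)"
      by (rule indep_vars_integrable[OF _ ind2 ii]) auto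
    moreover have "integral\<^sup>L M (\<lambda>x. \<Prod>l\<in>{i,j}. Z l x) = (\<Prod>l\<in>{i,j}. integral\<^sup>L M (Z l))"
      by (rule indep_vars_lebesgue_integral[OF _ ind2 ii]) auto
    ultimately show ?thesis using False Zint that by simp
  qed
  define T where "T x = (\<Sum>j\<in>{1..N}. Z j x)" for x
  have Tm: "T \<in> borel_measurable M" unfolding T_def using Zm by auto
  have Tsq: "(\<lambda>x. (T x)^2) = (\<lambda>x. \<Sum>i\<in>{1..N}. \<Sum>j\<in>{1..N}. Z i x * Z j x)"
    by (auto simp: T_def fun_eq_iff power2_eq_square sum_product)
  have intT: "integrable M (\<lambda>x. (T x)^2)"
    unfolding Tsq by (intro Bochner_Integration.integrable_sum) (use cross in blast)
  have ET: "integral\<^sup>L M (\<lambda>x. (T x)^2) \<le> real N * lam"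
  proof -
    have "integral\<^sup>L M (\<lambda>x. (T x)^2) = (\<Sum>i\<in>{1..N}. \<Sum>j\<in>{1..N}. integral\<^sup>L M (\<lambda>x. Z i x * Z j x))"
      unfolding Tsq
    proof (subst Bochner_Integration.integral_sum)
      show "\<And>i. i \<in> {1..N} \<Longrightarrow> integrable M (\<lambda>x. \<Sum>j\<in>{1..N}. Z i x * Z j x)"
        by (intro Bochner_Integration.integrable_sum) (use cross in blast)
      show "(\<Sum>i\<in>{1..N}. integral\<^sup>L M (\<lambda>x. \<Sum>j\<in>{1..N}. Z i x * Z j x)) = (\<Sum>i\<in>{1..N}. \<Sum>j\<in>{1..N}. integral\<^sup>L M (\<lambda>x. Z i x * Z j x))"
        by (intro sum.cong refl Bochner_Integration.integral_sum) (use cross in blast)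
    qed
    also have "\<dots> = (\<Sum>i\<in>{1..N}. integral\<^sup>L M (\<lambda>x. (Z i x)^2))"
    proof (intro sum.cong refl)
      fix i assume i: "i \<in> {1..N}"
      have "(\<Sum>j\<in>{1..N}. integral\<^sup>L M (\<lambda>x. Z i x * Z j x)) = (\<Sum>j\<in>{1..N}. if i = j then integral\<^sup>L M (\<lambda>x. (Z j x)^2) else 0)"
        using cross i by (intro sum.cong refl) blast
      also have "\<dots> = integral\<^sup>L M (\<lambda>x. (Z i x)^2)" using i by (simp add: sum.delta)
      finally show "(\<Sum>j\<in>{1..N}. integral\<^sup>L M (\<lambda>x. Z i x * Z j x)) = integral\<^sup>L M (\<lambda>x. (Z i x)^2)" .
    qed
    also have "\<dots> \<le> (\<Sum>i\<in>{1..N}. lam)" using Zsq by (intro sum_mono) auto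
    finally show ?thesis by simp
  qed
  define a where "a = real N * \<mu> / 2"
  have apos: "a > 0" unfolding a_def using Np mu_pos by simp
  have thr: "2 * m * \<epsilon> < a"
  proof -
    have e2: "\<epsilon>^2 > 0" using assms(3) by simp
    have me: "m * \<epsilon>^2 = c * real N" unfolding assms(6) using e2 by simp
    have ml: "m = lam * real N" using Np unfolding assms(7) by simp
    have "(2 * m * \<epsilon>)^2 = 4 * m * (m * \<epsilon>^2)" by (simp add: power2_eq_square ac_simps)
    also have "\<dots> = 4 * m * (c * real N)" by (simp only: me)
    also have "\<dots> = 4 * c * lam * (real N)^2" by (simp only: ml) (simp add: power2_eq_square ac_simps)
    also have "\<dots> < 4 * (c1^2 / 16) * lam * (real N)^2" using assms(5) lp Np by (intro mult_strict_right_mono mult_strict_left_mono) auto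
    also have "\<dots> = (real N)^2 * (c1^2 * lam) / 4" by simp
    also have "\<dots> \<le> (real N)^2 * \<mu>^2 / 4" using mu_lb Np by (intro divide_right_mono mult_left_mono) auto
    also have "\<dots> \<le> a^2" by (simp add: a_def power2_eq_square)
    finally have "(2 * m * \<epsilon>)^2 < a^2" .
    from power_less_imp_less_base[OF this less_imp_le[OF apos]] show ?thesis .
  qed
  have sub: "{x \<in> space M. (\<Sum>j=1..N. \<bar>real (Y j x) - m / real N\<bar>) < 2 * m * \<epsilon>} \<subseteq> {x \<in> space M. \<bar>T x\<bar> \<ge> a}"
  proof safe
    fix x assume x: "x \<in> space M" "(\<Sum>j=1..N. \<bar>real (Y j x) - m / real N\<bar>) < 2 * m * \<epsilon>"
    have "(\<Sum>j=1..N. \<bar>real (Y j x) - m / real N\<bar>) = T x + real N * \<mu>"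
      unfolding T_def Z_def g0_def mlam by (simp add: sum_subtractf)
    then have "T x < a - real N * \<mu>" using x thr by simp
    then have "T x \<le> - a" unfolding a_def by (simp add: mult.commute)
    then show "a \<le> \<bar>T x\<bar>" by simp
  qed
  have "measure M {x \<in> space M. (\<Sum>j=1..N. \<bar>real (Y j x) - m / real N\<bar>) < 2 * m * \<epsilon>} \<le> measure M {x \<in> space M. \<bar>T x\<bar> \<ge> a}"
    by (rule finite_measure_mono[OF sub]) (use Tm in measurable)
  also have "\<dots> \<le> integral\<^sup>L M (\<lambda>x. (T x)^2) / a^2"
    by (rule second_moment_method[OF Tm intT apos])
  also have "\<dots> \<le> real N * lam / a^2" using ET by (intro divide_right_mono) auto
  also have "\<dots> = 4 * lam / (real N * \<mu>^2)" unfolding a_def using Np by (simp add: field_simps power2_eq_square)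
  also have "\<dots> \<le> 4 * lam / (real N * (c1^2 * lam))"
    using mu_lb Np lp c1_pos mu_pos by (intro divide_left_mono mult_left_mono mult_pos_pos) auto
  also have "\<dots> = 4 / c1^2 * (1 / real N)" using lp by (simp add: field_simps)
  finally show ?thesis .
qed

end
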